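(* Let $(\gamma_\nu)_{\nu\ge 0}$ be complex numbers, let $f(z)=\sum_{\nu=0}^{\infty}\gamma_\nu z^\nu$ be the corresponding formal power series, and let $f_n(z)=\sum_{\nu=0}^{n}\gamma_\nu z^\nu$ be its partial sums. Work in the field $\mathbb{C}((z))$ of formal Laurent series. Define numbers $C_k^{(n)}$ by $C_0^{(n)}=-\gamma_{n+1}$ and $C_{k+1}^{(n)}=C_k^{(n+2)}-\bigl[C_k^{(n+1)}\bigr]^2/C_k^{(n)}$ for $k,n\in\mathbb{N}_0$, and assume that $C_k^{(n)}\neq 0$ for all $k,n\in\mathbb{N}_0$ (in particular $\gamma_\nu\ne 0$ for all $\nu\ge1$). Let $\mathcal{A}_k^{(n)}$ be Aitken's iterated $\Delta^2$ process applied to $s_n=f_n(z)$: $\mathcal{A}_0^{(n)}=f_n(z)$, $\mathcal{A}_{k+1}^{(n)}=\mathcal{A}_k^{(n)}-\bigl[\Delta\mathcal{A}_k^{(n)}\bigr]^2/\Delta^2\mathcal{A}_k^{(n)}$, where $\Delta$ acts on the superscript: $\Delta\mathcal{A}_k^{(n)}=\mathcal{A}_k^{(n+1)}-\mathcal{A}_k^{(n)}$. Then all $\mathcal{A}_k^{(n)}$ are well defined elements of $\mathbb{C}[[z]]$, and for all $k,n\in\mathbb{N}_0$: (i) $\mathcal{A}_k^{(n)}=f(z)+z^{n+2k+1}R_k^{(n)}(z)$ with $R_k^{(n)}(z)\in\mathbb{C}[[z]]$ having constant term $C_k^{(n)}$; in particular $f(z)-\mathcal{A}_k^{(n)}=O(z^{n+2k+1})$;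 (ii) $\mathcal{A}_k^{(n)}=f_{n+2k}(z)+G_k^{(n)}z^{n+2k+1}+O(z^{n+2k+2})$, where $G_k^{(n)}=C_k^{(n)}+\gamma_{n+2k+1}$ and the numbers $G_k^{(n)}$ satisfy $G_0^{(n)}=0$, $G_1^{(n)}=\gamma_{n+2}^2/\gamma_{n+1}$, and $G_{k+1}^{(n)}=G_k^{(n+2)}+\dfrac{\bigl[\gamma_{n+2k+2}-G_k^{(n+1)}\bigr]^2}{\gamma_{n+2k+1}-G_k^{(n)}}$ for $k,n\in\mathbb{N}_0$.
   Context: $\mathbb{N}_0=\{0,1,2,\dots\}$. $O(z^m)$ denotes an element of $z^m\mathbb{C}[[z]]$. The number $G_k^{(n)}$ is interpreted as the prediction for the coefficient $\gamma_{n+2k+1}$, the first coefficient not used in computing $\mathcal{A}_k^{(n)}$ (which uses $f_n,\dots,f_{n+2k}$). *)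

theory Defs
  imports Complex_Main "HOL-Computational_Algebra.Formal_Laurent_Series"
begin

definition fser :: "(nat \<Rightarrow> complex) \<Rightarrow> complex fps" where
  "fser \<gamma> = Abs_fps \<gamma>"

definition fpart :: "(nat \<Rightarrow> complex) \<Rightarrow> nat \<Rightarrow> complex fps" where
  "fpart \<gamma> n = Abs_fps (\<lambda>i. if i \<le> n then \<gamma> i else 0)"

fun Cn :: "(nat \<Rightarrow> complex) \<Rightarrow> nat \<Rightarrow> nat \<Rightarrow> complex" where
  "Cn \<gamma> 0 n = - \<gamma> (n + 1)"
| "Cn \<gamma> (Suc k) n = Cn \<gamma> k (n + 2) - (Cn \<gamma> k (n + 1))^2 / Cn \<gamma> k n"

definition Gn :: "(nat \<Rightarrow> complex) \<Rightarrow> nat \<Rightarrow> nat \<Rightarrow> complex" where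
  "Gn \<gamma> k n = Cn \<gamma> k n + \<gamma> (n + 2 * k + 1)"

fun Aitken :: "(nat \<Rightarrow> complex) \<Rightarrow> nat \<Rightarrow> nat \<Rightarrow> complex fls" where
  "Aitken \<gamma> 0 n = fps_to_fls (fpart \<gamma> n)"
| "Aitken \<gamma> (Suc k) n =
     Aitken \<gamma> k n - (Aitken \<gamma> k (n + 1) - Aitken \<gamma> k n)^2
       / (Aitken \<gamma> k (n + 2) - 2 * Aitken \<gamma> k (n + 1) + Aitken \<gamma> k n)"

end

theory Submission imports Defs begin
lemma alg:
  fixes F X r0 r1 r2 d :: "'a::field"
  assumes X: "X \<noteq> 0" and d: "d \<noteq> 0" and dd: "d = X^2*r2 - 2*X*r1 + r0"
  shows "(F + X^(m+2)*r2) - 2*(F+X^(m+1)*r1) + (F+X^m*r0) = X^m * d"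
    "(F + X^m*r0) - ((F + X^(m+1)*r1) - (F+X^m*r0))^2 / ((F+X^(m+2)*r2) - 2*(F+X^(m+1)*r1) + (F+X^m*r0))
      = F + X^(m+2) * ((r0*r2 - r1^2)/d)"
proof -
  show D: "(F + X^(m+2)*r2) - 2*(F+X^(m+1)*r1) + (F+X^m*r0) = X^m * d"
    unfolding dd by (simp add: algebra_simps power_add power2_eq_square)
  have N: "(F + X^(m+1)*r1) - (F+X^m*r0) = X^m * (X*r1 - r0)"
    by (simp add: algebra_simps)
  have Xm: "X^m \<noteq> 0" using X by simp
  have 1: "(X^m * (X*r1 - r0))^2 / (X^m * d) = X^m * ((X*r1 - r0)^2 / d)"
    using Xm X d by (simp add: power_mult_distrib power2_eq_square)
  have 2: "r0 - (X*r1 - r0)^2 / d = X^2 * ((r0*r2 - r1^2)/d)"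
  proof -
    have "r0 - (X*r1 - r0)^2 / d = (r0*d - (X*r1 - r0)^2) / d" using d by (simp add: field_simps)
    also have "r0*d - (X*r1 - r0)^2 = X^2 * (r0*r2 - r1^2)" unfolding dd
      by (simp add: algebra_simps power2_eq_square)
    finally show ?thesis by simp
  qed
  have "(F + X^m*r0) - (X^m * (X*r1 - r0))^2 / (X^m * d) = F + X^m * (r0 - (X*r1 - r0)^2 / d)"
    unfolding 1 by (simp add: algebra_simps)
  also have "\<dots> = F + X^(m+2) * ((r0*r2 - r1^2)/d)" unfolding 2 by (simp add: power_add power2_eq_square)
  finally show "(F + X^m*r0) - ((F + X^(m+1)*r1) - (F+X^m*r0))^2 / ((F+X^(m+2)*r2) - 2*(F+X^(m+1)*r1) + (F+X^m*r0))
      = F + X^(m+2) * ((r0*r2 - r1^2)/d)" using D N by simp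
qed

lemma base_fpart:
  "fps_to_fls (fpart \<gamma> n) = fps_to_fls (fser \<gamma>) + fls_X^(n+1) * fps_to_fls (Abs_fps (\<lambda>i. - \<gamma> (i+n+1)))"
proof -
  have "fpart \<gamma> n = fser \<gamma> + fps_X^(n+1) * Abs_fps (\<lambda>i. - \<gamma> (i+n+1))"
    by (rule fps_ext) (simp only: fps_add_nth fps_X_power_mult_nth, auto simp: fpart_def fser_def)
  then show ?thesis by (simp add: fls_times_fps_to_fls fps_to_fls_power)
qed

lemma partI:
  fixes \<gamma> :: "nat \<Rightarrow> complex"
  assumes nz: "\<And>k n. Cn \<gamma> k n \<noteq> 0"
  shows "\<forall>n. \<exists>R. Aitken \<gamma> k n = fps_to_fls (fser \<gamma>) + fls_X^(n+2*k+1) * fps_to_fls R \<and> R$0 = Cn \<gamma> k n"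
proof (induction k)
  case 0
  show ?case using base_fpart by fastforce
next
  case (Suc k)
  show ?case
  proof
    fix n
    define m where "m = n + 2*k + 1"
    define F where "F = fps_to_fls (fser \<gamma>)"
    define X :: "complex fls" where "X = fls_X"
    obtain R0 where R0: "Aitken \<gamma> k n = F + X^m * fps_to_fls R0" "R0$0 = Cn \<gamma> k n"
      using Suc.IH m_def F_def X_def by blast
    obtain R1 where R1: "Aitken \<gamma> k (n+1) = F + X^(m+1) * fps_to_fls R1" "R1$0 = Cn \<gamma> k (n+1)"
      using Suc.IH[rule_format, of "n+1"] m_def F_def X_def by (auto simp: algebra_simps)
    obtain R2 where R2: "Aitken \<gamma> k (n+2) = F + X^(m+2) * fps_to_fls R2" "R2$0 = Cn \<gamma> k (n+2)"
      using Suc.IH[rule_format, of "n+2"] m_def F_def X_def by (auto simp: algebra_simps)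
    define D where "D = fps_X^2*R2 - 2*fps_X*R1 + R0"
    have D0: "D$0 \<noteq> 0" using R0 nz by (simp add: D_def fps_mult_nth_0 numeral_2_eq_2)
    have dd: "fps_to_fls D = X^2 * fps_to_fls R2 - 2 * X * fps_to_fls R1 + fps_to_fls R0"
      by (simp add: D_def X_def fls_times_fps_to_fls fps_to_fls_power)
    have dnz: "fps_to_fls D \<noteq> 0" using D0 by auto
    have Xnz: "X \<noteq> 0" by (simp add: X_def)
    note A = alg[OF Xnz dnz dd, of F m]
    have inv: "inverse (fps_to_fls D) = fps_to_fls (inverse D)"
      by (rule fls_inverse_fps_to_fls) (use D0 in \<open>simp add: subdegree_eq_0\<close>)
    define R where "R = (R0*R2 - R1^2) * inverse D"
    have q: "(fps_to_fls R0 * fps_to_fls R2 - (fps_to_fls R1)^2) / fps_to_fls D = fps_to_fls R"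
      by (simp add: R_def divide_inverse inv fls_times_fps_to_fls fps_to_fls_power)
    have "Aitken \<gamma> (Suc k) n = F + X^(m+2) * fps_to_fls R"
      using A(2) q R0(1) R1(1) R2(1) by simp
    moreover have "m + 2 = n + 2 * Suc k + 1" by (simp add: m_def)
    moreover have "R$0 = Cn \<gamma> (Suc k) n"
      using R0(2) R1(2) R2(2) nz[of k n] D0
      by (simp add: R_def D_def power2_eq_square field_simps numeral_2_eq_2)
    ultimately show "\<exists>R. Aitken \<gamma> (Suc k) n = fps_to_fls (fser \<gamma>) + fls_X^(n+2*Suc k+1) * fps_to_fls R \<and> R$0 = Cn \<gamma> (Suc k) n"
      unfolding F_def X_def by metis
  qed
qed

lemma partII:
  fixes \<gamma> :: "nat \<Rightarrow> complex"
  shows "\<exists>S. fps_to_fls (fser \<gamma>) + fls_X^(N+1) * fps_to_fls R =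
     fps_to_fls (fpart \<gamma> N) + fls_const (R$0 + \<gamma> (N+1)) * fls_X ^ (N+1) + fls_X^(N+2) * fps_to_fls S"
proof -
  define S where "S = Abs_fps (\<lambda>i. \<gamma> (i+N+2) + R$(i+1))"
  have "fser \<gamma> + fps_X^(N+1) * R = fpart \<gamma> N + fps_X^(N+1) * fps_const (R$0 + \<gamma> (N+1)) + fps_X^(N+2) * S"
  proof (rule fps_ext)
    fix i
    show "(fser \<gamma> + fps_X^(N+1) * R) $ i = (fpart \<gamma> N + fps_X^(N+1) * fps_const (R$0 + \<gamma> (N+1)) + fps_X^(N+2) * S) $ i"
    proof (simp only: fps_add_nth fps_X_power_mult_nth)
      consider "i \<le> N" | "i = N+1" | "i \<ge> N+2" by linarith
      then show "fser \<gamma> $ i + (if i < N + 1 then 0 else R $ (i - (N + 1))) =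
        fpart \<gamma> N $ i + (if i < N + 1 then 0 else fps_const (R $ 0 + \<gamma> (N + 1)) $ (i - (N + 1))) +
        (if i < N + 2 then 0 else S $ (i - (N + 2)))"
      proof cases
        case 3
        define j where "j = i - (N+2)"
        have j: "i = j + N + 2" using 3 j_def by simp
        show ?thesis by (simp add: j S_def fser_def fpart_def)
      next
        case 1
        then show ?thesis by (simp add: fser_def fpart_def)
      next
        case 2
        then show ?thesis by (simp add: fser_def fpart_def)
      qed
    qed
  qed
  then have "fps_to_fls (fser \<gamma> + fps_X^(N+1) * R) = fps_to_fls (fpart \<gamma> N + fps_X^(N+1) * fps_const (R$0 + \<gamma> (N+1)) + fps_X^(N+2) * S)"
    by (rule arg_cong)
  then have "fps_to_fls (fser \<gamma>) + fls_X^(N+1) * fps_to_fls R =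
     fps_to_fls (fpart \<gamma> N) + fls_X^(N+1) * fls_const (R$0 + \<gamma> (N+1)) + fls_X^(N+2) * fps_to_fls S"
    by (simp only: fps_to_fls_plus fls_times_fps_to_fls fps_to_fls_power fps_X_to_fls fps_const_to_fls)
  then show ?thesis by (simp add: mult.commute)
qed

theorem mainTheorem1:
  fixes \<gamma> :: "nat \<Rightarrow> complex"
  assumes nz: "\<And>k n. Cn \<gamma> k n \<noteq> 0"
  shows "\<forall>k n.
     (Aitken \<gamma> k (n + 2) - 2 * Aitken \<gamma> k (n + 1) + Aitken \<gamma> k n \<noteq> 0)
   \<and> (\<exists>F :: complex fps. Aitken \<gamma> k n = fps_to_fls F)
   \<and> (\<exists>R :: complex fps. Aitken \<gamma> k n = fps_to_fls (fser \<gamma>) + fls_X ^ (n + 2 * k + 1) * fps_to_fls R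
          \<and> fps_nth R 0 = Cn \<gamma> k n)
   \<and> (\<exists>S :: complex fps. Aitken \<gamma> k n = fps_to_fls (fpart \<gamma> (n + 2 * k))
          + fls_const (Gn \<gamma> k n) * fls_X ^ (n + 2 * k + 1) + fls_X ^ (n + 2 * k + 2) * fps_to_fls S)
   \<and> Gn \<gamma> 0 n = 0
   \<and> Gn \<gamma> 1 n = (\<gamma> (n + 2))^2 / \<gamma> (n + 1)
   \<and> Gn \<gamma> (k + 1) n = Gn \<gamma> k (n + 2)
        + (\<gamma> (n + 2 * k + 2) - Gn \<gamma> k (n + 1))^2 / (\<gamma> (n + 2 * k + 1) - Gn \<gamma> k n)"
proof (intro allI conjI)
  fix k n :: nat
  define m where "m = n + 2*k + 1"
  define F where "F = fps_to_fls (fser \<gamma>)"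
  define X :: "complex fls" where "X = fls_X"
  obtain R0 where R0: "Aitken \<gamma> k n = F + X^m * fps_to_fls R0" "R0$0 = Cn \<gamma> k n"
    using partI[OF nz, of k] m_def F_def X_def by blast
  obtain R1 where R1: "Aitken \<gamma> k (n+1) = F + X^(m+1) * fps_to_fls R1" "R1$0 = Cn \<gamma> k (n+1)"
    using partI[OF nz, of k, rule_format, of "n+1"] m_def F_def X_def by (auto simp: algebra_simps)
  obtain R2 where R2: "Aitken \<gamma> k (n+2) = F + X^(m+2) * fps_to_fls R2" "R2$0 = Cn \<gamma> k (n+2)"
    using partI[OF nz, of k, rule_format, of "n+2"] m_def F_def X_def by (auto simp: algebra_simps)
  define D where "D = fps_X^2*R2 - 2*fps_X*R1 + R0"
  have D0: "D$0 \<noteq> 0" using R0 nz by (simp add: D_def fps_mult_nth_0 numeral_2_eq_2)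
  have dd: "fps_to_fls D = X^2 * fps_to_fls R2 - 2 * X * fps_to_fls R1 + fps_to_fls R0"
    by (simp add: D_def X_def fls_times_fps_to_fls fps_to_fls_power)
  have dnz: "fps_to_fls D \<noteq> 0" using D0 by auto
  have Xnz: "X \<noteq> 0" by (simp add: X_def)
  note A = alg[OF Xnz dnz dd, of F m]
  show "Aitken \<gamma> k (n + 2) - 2 * Aitken \<gamma> k (n + 1) + Aitken \<gamma> k n \<noteq> 0"
    using A(1) R0(1) R1(1) R2(1) Xnz dnz by simp
  show "\<exists>R. Aitken \<gamma> k n = fps_to_fls (fser \<gamma>) + fls_X ^ (n + 2 * k + 1) * fps_to_fls R \<and> R $ 0 = Cn \<gamma> k n"
    using R0 unfolding F_def X_def m_def by blast
  show "\<exists>S. Aitken \<gamma> k n = fps_to_fls (fpart \<gamma> (n + 2 * k))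
          + fls_const (Gn \<gamma> k n) * fls_X ^ (n + 2 * k + 1) + fls_X ^ (n + 2 * k + 2) * fps_to_fls S"
    using partII[of \<gamma> "n+2*k" R0] R0 unfolding F_def X_def m_def Gn_def
    by (simp add: add.assoc)
  show "\<exists>F. Aitken \<gamma> k n = fps_to_fls F"
  proof
    show "Aitken \<gamma> k n = fps_to_fls (fser \<gamma> + fps_X^m * R0)"
      using R0(1) by (simp add: F_def X_def fls_times_fps_to_fls fps_to_fls_power)
  qed
  show "Gn \<gamma> 0 n = 0" by (simp add: Gn_def)
  show "Gn \<gamma> 1 n = (\<gamma> (n + 2))^2 / \<gamma> (n + 1)"
    by (simp add: Gn_def numeral_2_eq_2)
  show "Gn \<gamma> (k + 1) n = Gn \<gamma> k (n + 2)
        + (\<gamma> (n + 2 * k + 2) - Gn \<gamma> k (n + 1))^2 / (\<gamma> (n + 2 * k + 1) - Gn \<gamma> k n)"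
    by (simp add: Gn_def algebra_simps power2_eq_square)
qed
end
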